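(* For every $x\in\mathcal X$, the maps $\mu\mapsto C^\mu(x)$ and $\mu\mapsto D^\mu(x)$ are right-continuous on $[0,\infty)$ (i.e. for every $\mu\ge0$ they are constant on $[\mu,\mu+\varepsilon)$ for some $\varepsilon>0$).
   Context: Let $\alpha\in(0,1)$. $\mathcal I$ is a finite collection of subsets of $\mathcal Y$ enumerated in a fixed lexicographic order, and $w:\mathcal I\to(0,B)$ a bounded positive weight. For $x\in\mathcal X$, $C\in\mathcal I$, $\hat p_C(x)\in[0,1]$ is a fixed estimate of $\mathbb P(Y\in C\mid X=x)$. For $\mu\ge0$ let $\hat\ell_{x,C}(\mu)=w(C)\hat p_C(x)+\mu(\hat p_C(x)-(1-\alpha))$. $C^\mu(x)$ is a maximizer of $\hat\ell_{x,C}(\mu)$ over $C\in\mathcal I$, ties broken in favor of the smallest weight $w(C)$ and then the smallest index; $D^\mu(x)=\mathbb 1\{\max_{C\in\mathcal I}\hat\ell_{x,C}(\mu)>0\}$. *)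

theory Defs
  imports Complex_Main
begin

text \<open>The finite collection \<I> is given as a list Cs (distinct, nonempty); the position
  of a set in the list is its index in the fixed enumeration.
  w: weights, phat x C: estimate of P(Y in C | X = x).\<close>

definition ell :: "('y set \<Rightarrow> real) \<Rightarrow> ('x \<Rightarrow> 'y set \<Rightarrow> real) \<Rightarrow> real
                   \<Rightarrow> 'x \<Rightarrow> 'y set \<Rightarrow> real \<Rightarrow> real" where
  "ell w phat \<alpha> x C \<mu> = w C * phat x C + \<mu> * (phat x C - (1 - \<alpha>))"

definition idx :: "'a list \<Rightarrow> 'a \<Rightarrow> nat" where
  "idx xs a = (LEAST i. i < length xs \<and> xs ! i = a)"

definition selected :: "'y set list \<Rightarrow> ('y set \<Rightarrow> real) \<Rightarrow> ('x \<Rightarrow> 'y set \<Rightarrow> real) \<Rightarrow> real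
                   \<Rightarrow> real \<Rightarrow> 'x \<Rightarrow> 'y set \<Rightarrow> bool" where
  "selected Cs w phat \<alpha> \<mu> x C \<longleftrightarrow>
     C \<in> set Cs \<and>
     (\<forall>C'\<in>set Cs. ell w phat \<alpha> x C' \<mu> \<le> ell w phat \<alpha> x C \<mu>) \<and>
     (\<forall>C'\<in>set Cs. ell w phat \<alpha> x C' \<mu> = ell w phat \<alpha> x C \<mu> \<longrightarrow> w C \<le> w C') \<and>
     (\<forall>C'\<in>set Cs. ell w phat \<alpha> x C' \<mu> = ell w phat \<alpha> x C \<mu> \<and> w C' = w C
          \<longrightarrow> idx Cs C \<le> idx Cs C')"

definition Cmu :: "'y set list \<Rightarrow> ('y set \<Rightarrow> real) \<Rightarrow> ('x \<Rightarrow> 'y set \<Rightarrow> real) \<Rightarrow> real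
                   \<Rightarrow> real \<Rightarrow> 'x \<Rightarrow> 'y set" where
  "Cmu Cs w phat \<alpha> \<mu> x = (THE C. selected Cs w phat \<alpha> \<mu> x C)"

definition Dmu :: "'y set list \<Rightarrow> ('y set \<Rightarrow> real) \<Rightarrow> ('x \<Rightarrow> 'y set \<Rightarrow> real) \<Rightarrow> real
                   \<Rightarrow> real \<Rightarrow> 'x \<Rightarrow> nat" where
  "Dmu Cs w phat \<alpha> \<mu> x =
     (if Max ((\<lambda>C. ell w phat \<alpha> x C \<mu>) ` set Cs) > 0 then 1 else 0)"

end

theory Submission
  imports Defs
begin

lemma idx_nth: "a \<in> set xs \<Longrightarrow> xs ! idx xs a = a"
  unfolding idx_def
  by (rule LeastI2_ex[where P="\<lambda>i. i < length xs \<and> xs ! i = a"])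
     (auto simp: in_set_conv_nth)

lemma sel_unique:
  assumes "selected Cs w phat \<alpha> \<mu> x C" "selected Cs w phat \<alpha> \<mu> x C'"
  shows "C = C'"
proof -
  have e: "ell w phat \<alpha> x C \<mu> = ell w phat \<alpha> x C' \<mu>"
    using assms unfolding selected_def by (meson order_antisym)
  have ww: "w C = w C'"
    using assms e unfolding selected_def by (metis order_antisym)
  have "idx Cs C = idx Cs C'"
    using assms e ww unfolding selected_def by (metis order_antisym)
  then show ?thesis using assms idx_nth unfolding selected_def by metis
qed

lemma sel_exists:
  assumes "Cs \<noteq> []"
  shows "\<exists>C. selected Cs w phat \<alpha> \<mu> x C"
proof -
  let ?L = "\<lambda>C. ell w phat \<alpha> x C \<mu>"
  define m where "m = Max (?L ` set Cs)"
  define M1 where "M1 = {C\<in>set Cs. ?L C = m}"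
  have fin: "finite (?L ` set Cs)" "?L ` set Cs \<noteq> {}" using assms by auto
  have M1ne: "M1 \<noteq> {}" using Max_in[OF fin] unfolding M1_def m_def by auto
  have M1fin: "finite M1" unfolding M1_def by auto
  define wm where "wm = Min (w ` M1)"
  define M2 where "M2 = {C\<in>M1. w C = wm}"
  have "wm \<in> w ` M1" using Min_in[of "w ` M1"] M1ne M1fin unfolding wm_def by auto
  then have M2ne: "M2 \<noteq> {}" unfolding M2_def by auto
  have M2fin: "finite M2" using M1fin unfolding M2_def by auto
  define im where "im = Min (idx Cs ` M2)"
  have "im \<in> idx Cs ` M2" using Min_in[of "idx Cs ` M2"] M2ne M2fin unfolding im_def by auto
  then obtain C0 where C0: "C0 \<in> M2" "idx Cs C0 = im" by auto
  have "selected Cs w phat \<alpha> \<mu> x C0"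
    unfolding selected_def
  proof (intro conjI ballI impI)
    show "C0 \<in> set Cs" using C0 unfolding M2_def M1_def by auto
    have L0: "?L C0 = m" using C0 unfolding M2_def M1_def by auto
    fix C' assume C': "C' \<in> set Cs"
    show "?L C' \<le> ?L C0" using L0 C' fin m_def by auto
    { assume "?L C' = ?L C0"
      then have "C' \<in> M1" using L0 C' unfolding M1_def by auto
      then show "w C0 \<le> w C'" using C0 M1fin unfolding M2_def wm_def by auto }
    { assume h: "?L C' = ?L C0 \<and> w C' = w C0"
      then have "C' \<in> M2" using L0 C' C0 unfolding M1_def M2_def by auto
      then show "idx Cs C0 \<le> idx Cs C'" using C0 M2fin unfolding im_def by auto }
  qed
  then show ?thesis by blast
qed

lemma ell_shift: "ell w phat \<alpha> x C \<nu> = ell w phat \<alpha> x C \<mu> + (\<nu> - \<mu>) * (phat x C - (1 - \<alpha>))"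
  unfolding ell_def by (simp add: algebra_simps)

lemma key:
  assumes a0: "0 < \<alpha>" and a1: "\<alpha> < 1"
    and wpos: "\<And>C. C \<in> set Cs \<Longrightarrow> 0 < w C"
    and pb: "\<And>C. C \<in> set Cs \<Longrightarrow> 0 \<le> phat x C \<and> phat x C \<le> 1"
    and mu: "0 \<le> \<mu>"
    and sel: "selected Cs w phat \<alpha> \<mu> x C0"
  shows "\<exists>\<epsilon>>0. \<forall>\<nu>. \<mu> \<le> \<nu> \<and> \<nu> < \<mu> + \<epsilon> \<longrightarrow> selected Cs w phat \<alpha> \<nu> x C0"
proof -
  let ?L = "\<lambda>C \<nu>. ell w phat \<alpha> x C \<nu>"
  let ?s = "\<lambda>C. phat x C - (1 - \<alpha>)"
  have C0in: "C0 \<in> set Cs" using sel unfolding selected_def by auto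
  define G where "G = {?L C0 \<mu> - ?L C \<mu> | C. C \<in> set Cs \<and> ?L C \<mu> < ?L C0 \<mu>}"
  define \<epsilon> where "\<epsilon> = Min (insert 1 G)"
  have Gfin: "finite G" unfolding G_def by auto
  have Gpos: "\<forall>g\<in>G. g > 0" unfolding G_def by auto
  have epos: "\<epsilon> > 0" unfolding \<epsilon>_def using Gfin Gpos by auto
  have ele: "\<epsilon> \<le> ?L C0 \<mu> - ?L C \<mu>" if "C \<in> set Cs" "?L C \<mu> < ?L C0 \<mu>" for C
    unfolding \<epsilon>_def using Gfin that unfolding G_def by (intro Min_le) auto
  have sdiff: "?s C - ?s C0 \<le> 1" if "C \<in> set Cs" for C
    using pb[OF that] pb[OF C0in] a0 by auto
  have strict: "?L C \<nu> < ?L C0 \<nu>"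
    if C: "C \<in> set Cs" "?L C \<mu> < ?L C0 \<mu>" and nu: "\<mu> \<le> \<nu>" "\<nu> < \<mu> + \<epsilon>" for C \<nu>
  proof -
    have "(\<nu> - \<mu>) * (?s C - ?s C0) \<le> (\<nu> - \<mu>) * 1"
      using sdiff[OF C(1)] nu by (intro mult_left_mono) auto
    then show ?thesis using ele[OF C] nu ell_shift[of w phat \<alpha> x C \<nu> \<mu>]
        ell_shift[of w phat \<alpha> x C0 \<nu> \<mu>] by (simp add: algebra_simps)
  qed
  have slope: "?s C \<le> ?s C0" if C: "C \<in> set Cs" "?L C \<mu> = ?L C0 \<mu>" for C
  proof (rule ccontr)
    assume "\<not> ?thesis"
    then have pp: "phat x C > phat x C0" by auto
    have wle: "w C0 \<le> w C" using sel C unfolding selected_def by auto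
    have "(w C + \<mu>) * phat x C0 < (w C + \<mu>) * phat x C"
      using pp wpos[OF C(1)] mu by (intro mult_strict_left_mono) auto
    moreover have "(w C0 + \<mu>) * phat x C0 \<le> (w C + \<mu>) * phat x C0"
      using wle pb[OF C0in] by (intro mult_right_mono) auto
    ultimately show False using C(2) unfolding ell_def by (simp add: algebra_simps)
  qed
  have "\<forall>\<nu>. \<mu> \<le> \<nu> \<and> \<nu> < \<mu> + \<epsilon> \<longrightarrow> selected Cs w phat \<alpha> \<nu> x C0"
  proof (intro allI impI)
    fix \<nu> assume nu: "\<mu> \<le> \<nu> \<and> \<nu> < \<mu> + \<epsilon>"
    have inM: "?L C \<mu> = ?L C0 \<mu>" if "C \<in> set Cs" "?L C \<nu> = ?L C0 \<nu>" for C
    proof -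
      have "?L C \<mu> \<le> ?L C0 \<mu>" using sel that unfolding selected_def by auto
      then show ?thesis using strict[of C \<nu>] that nu by force
    qed
    show "selected Cs w phat \<alpha> \<nu> x C0"
      unfolding selected_def
    proof (intro conjI ballI impI)
      show "C0 \<in> set Cs" by (rule C0in)
      fix C' assume C': "C' \<in> set Cs"
      show "?L C' \<nu> \<le> ?L C0 \<nu>"
      proof (cases "?L C' \<mu> < ?L C0 \<mu>")
        case True then show ?thesis using strict[of C' \<nu>] C' nu by force
      next
        case False
        then have eq: "?L C' \<mu> = ?L C0 \<mu>" using sel C' unfolding selected_def by force
        have "(\<nu> - \<mu>) * ?s C' \<le> (\<nu> - \<mu>) * ?s C0"
          using slope[OF C' eq] nu by (intro mult_left_mono) auto
        then show ?thesis using eq ell_shift[of w phat \<alpha> x C' \<nu> \<mu>]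
            ell_shift[of w phat \<alpha> x C0 \<nu> \<mu>] by simp
      qed
      { assume "?L C' \<nu> = ?L C0 \<nu>"
        then have "?L C' \<mu> = ?L C0 \<mu>" using inM C' by auto
        then show "w C0 \<le> w C'" using sel C' unfolding selected_def by auto }
      { assume h: "?L C' \<nu> = ?L C0 \<nu> \<and> w C' = w C0"
        then have "?L C' \<mu> = ?L C0 \<mu>" using inM C' by auto
        then show "idx Cs C0 \<le> idx Cs C'" using sel C' h unfolding selected_def by auto }
    qed
  qed
  then show ?thesis using epos by blast
qed

lemma Cmu_eq: "selected Cs w phat \<alpha> \<mu> x C \<Longrightarrow> Cmu Cs w phat \<alpha> \<mu> x = C"
  unfolding Cmu_def apply (rule the_equality) apply assumption using sel_unique by metis

lemma Max_sel: "selected Cs w phat \<alpha> \<mu> x C \<Longrightarrow>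
   Max ((\<lambda>C. ell w phat \<alpha> x C \<mu>) ` set Cs) = ell w phat \<alpha> x C \<mu>"
  unfolding selected_def by (intro Max_eqI) auto

theorem proposition10:
  fixes Cs :: "'y set list" and w :: "'y set \<Rightarrow> real"
    and phat :: "'x \<Rightarrow> 'y set \<Rightarrow> real" and \<alpha> B :: real
  assumes "0 < \<alpha>" and "\<alpha> < 1"
    and "Cs \<noteq> []" and "distinct Cs"
    and "\<And>C. C \<in> set Cs \<Longrightarrow> 0 < w C \<and> w C < B"
    and "\<And>x C. C \<in> set Cs \<Longrightarrow> 0 \<le> phat x C \<and> phat x C \<le> 1"
  shows "\<forall>x \<mu>. \<mu> \<ge> 0 \<longrightarrow>
           (\<exists>\<epsilon>>0. \<forall>\<nu>. \<mu> \<le> \<nu> \<and> \<nu> < \<mu> + \<epsilon> \<longrightarrow> Cmu Cs w phat \<alpha> \<nu> x = Cmu Cs w phat \<alpha> \<mu> x) \<and>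
           (\<exists>\<epsilon>>0. \<forall>\<nu>. \<mu> \<le> \<nu> \<and> \<nu> < \<mu> + \<epsilon> \<longrightarrow> Dmu Cs w phat \<alpha> \<nu> x = Dmu Cs w phat \<alpha> \<mu> x)"
proof (intro allI impI conjI)
  fix x and \<mu> :: real assume mu: "\<mu> \<ge> 0"
  obtain C0 where sel: "selected Cs w phat \<alpha> \<mu> x C0" using sel_exists[OF assms(3), of w phat \<alpha> \<mu> x] by blast
  have C0in: "C0 \<in> set Cs" using sel unfolding selected_def by auto
  obtain \<epsilon> where epos: "\<epsilon> > 0"
    and ep: "\<forall>\<nu>. \<mu> \<le> \<nu> \<and> \<nu> < \<mu> + \<epsilon> \<longrightarrow> selected Cs w phat \<alpha> \<nu> x C0"
    using key[OF assms(1,2) _ _ mu sel] assms(5,6) by blast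
  show "(\<exists>\<epsilon>>0. \<forall>\<nu>. \<mu> \<le> \<nu> \<and> \<nu> < \<mu> + \<epsilon> \<longrightarrow> Cmu Cs w phat \<alpha> \<nu> x = Cmu Cs w phat \<alpha> \<mu> x)"
    using epos ep Cmu_eq[OF sel] Cmu_eq by metis
  let ?l = "ell w phat \<alpha> x C0 \<mu>"
  let ?s = "phat x C0 - (1 - \<alpha>)"
  define \<delta> where "\<delta> = (if ?l > 0 then min \<epsilon> ?l else \<epsilon>)"
  have dpos: "\<delta> > 0" using epos unfolding \<delta>_def by auto
  have "\<forall>\<nu>. \<mu> \<le> \<nu> \<and> \<nu> < \<mu> + \<delta> \<longrightarrow> Dmu Cs w phat \<alpha> \<nu> x = Dmu Cs w phat \<alpha> \<mu> x"
  proof (intro allI impI)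
    fix \<nu> assume nu: "\<mu> \<le> \<nu> \<and> \<nu> < \<mu> + \<delta>"
    have "\<delta> \<le> \<epsilon>" unfolding \<delta>_def by auto
    then have selv: "selected Cs w phat \<alpha> \<nu> x C0" using ep nu by auto
    have sh: "ell w phat \<alpha> x C0 \<nu> = ?l + (\<nu> - \<mu>) * ?s" by (rule ell_shift)
    have pb: "0 \<le> phat x C0" "phat x C0 \<le> 1" "0 < w C0" using assms(5,6) C0in by auto
    have "(ell w phat \<alpha> x C0 \<nu> > 0) = (?l > 0)"
    proof (cases "?l > 0")
      case True
      have "\<nu> - \<mu> < ?l" using nu True unfolding \<delta>_def by auto
      moreover have "(\<nu> - \<mu>) * ?s \<ge> (\<nu> - \<mu>) * (-1)"
        using pb nu assms(1) by (intro mult_left_mono) auto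
      ultimately show ?thesis using True sh by auto
    next
      case False
      have "?s \<le> 0"
      proof (rule ccontr)
        assume "\<not> ?s \<le> 0"
        then have "phat x C0 > 0" using assms(2) by auto
        then have "w C0 * phat x C0 > 0" using pb by auto
        moreover have "\<mu> * ?s \<ge> 0" using mu \<open>\<not> ?s \<le> 0\<close> by auto
        ultimately show False using False unfolding ell_def by auto
      qed
      then have "(\<nu> - \<mu>) * ?s \<le> 0" using nu by (simp add: mult_nonneg_nonpos)
      then show ?thesis using False sh by auto
    qed
    then show "Dmu Cs w phat \<alpha> \<nu> x = Dmu Cs w phat \<alpha> \<mu> x"
      unfolding Dmu_def Max_sel[OF selv] Max_sel[OF sel] by simp
  qed
  then show "(\<exists>\<epsilon>>0. \<forall>\<nu>. \<mu> \<le> \<nu> \<and> \<nu> < \<mu> + \<epsilon> \<longrightarrow> Dmu Cs w phat \<alpha> \<nu> x = Dmu Cs w phat \<alpha> \<mu> x)"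
    using dpos by blast
qed

end
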